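(* For each $q\in\mathbb{C}\setminus\{0\}$ and $n\in\mathbb{N}$, $\mathcal{O}_q(\mathbb{B}_\infty^n)=\mathcal{O}_q(\mathbb{D}_\infty^n)$ as subspaces of the space of formal series $\sum_{k\in\mathbb{Z}_+^n}c_kx^k$ and as Fréchet algebras.
   Context: $\mathcal{O}_q^{\mathrm{reg}}(\mathbb{C}^n)$: algebra generated by $x_1,\dots,x_n$ with $x_ix_j=qx_jx_i$ ($i<j$); basis $x^k=x_1^{k_1}\cdots x_n^{k_n}$, $k\in\mathbb{Z}_+^n$. Put $w_q(k)=1$ if $|q|\ge1$ and $w_q(k)=|q|^{\sum_{i<j}k_ik_j}$ if $|q|<1$; $u_q(k)=|q|^{\sum_{i<j}k_ik_j}$; $[m]_q=1+\dots+q^{m-1}$, $[m]_q!=[1]_q\cdots[m]_q$, $[0]_q!=1$, $[k]_q!=\prod_i[k_i]_q!$, $|k|=\sum k_i$. For $f=\sum_kc_kx^k$: $\|f\|_{\mathbb{D},\rho}=\sum_k|c_k|w_q(k)\rho^{|k|}$ and $\|f\|_{\mathbb{B},\rho}=\sum_k|c_k|\big([k]_{|q|^2}!/[|k|]_{|q|^2}!\big)^{1/2}u_q(k)\rho^{|k|}$. $\mathcal{O}_q(\mathbb{D}_\infty^n)$ (resp. $\mathcal{O}_q(\mathbb{B}_\infty^n)$) is the completion of $\mathcal{O}_q^{\mathrm{reg}}(\mathbb{C}^n)$ with respect to the norms $\|\cdot\|_{\mathbb{D},\rho}$ (resp. $\|\cdot\|_{\mathbb{B},\rho}$), $\rho\in(0,\infty)$,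 realized as formal series with all these norms finite. *)

theory Defs
  imports "HOL-Analysis.Analysis"
begin

text \<open>Multi-indices k in Z_+^n are represented as functions nat => nat vanishing
outside {0..<n}.  A formal series sum_k c_k x^k is represented by its coefficient
function c, which vanishes outside the multi-indices.\<close>

definition multi_idx :: "nat \<Rightarrow> (nat \<Rightarrow> nat) set" where
  "multi_idx n = {k. \<forall>i\<ge>n. k i = 0}"

definition formal_series :: "nat \<Rightarrow> ((nat \<Rightarrow> nat) \<Rightarrow> complex) set" where
  "formal_series n = {c. \<forall>k. k \<notin> multi_idx n \<longrightarrow> c k = 0}"

definition abs_idx :: "nat \<Rightarrow> (nat \<Rightarrow> nat) \<Rightarrow> nat" where
  "abs_idx n k = (\<Sum>i<n. k i)"

definition cross_exp :: "nat \<Rightarrow> (nat \<Rightarrow> nat) \<Rightarrow> nat" where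
  "cross_exp n k = (\<Sum>j<n. \<Sum>i<j. k i * k j)"

definition w_q :: "complex \<Rightarrow> nat \<Rightarrow> (nat \<Rightarrow> nat) \<Rightarrow> real" where
  "w_q q n k = (if norm q \<ge> 1 then 1 else norm q ^ cross_exp n k)"

definition u_q :: "complex \<Rightarrow> nat \<Rightarrow> (nat \<Rightarrow> nat) \<Rightarrow> real" where
  "u_q q n k = norm q ^ cross_exp n k"

definition qint :: "real \<Rightarrow> nat \<Rightarrow> real" where
  "qint r m = (\<Sum>i<m. r ^ i)"

definition qfact :: "real \<Rightarrow> nat \<Rightarrow> real" where
  "qfact r m = (\<Prod>j\<in>{1..m}. qint r j)"

definition multi_qfact :: "real \<Rightarrow> nat \<Rightarrow> (nat \<Rightarrow> nat) \<Rightarrow> real" where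
  "multi_qfact r n k = (\<Prod>i<n. qfact r (k i))"

definition weightD :: "complex \<Rightarrow> nat \<Rightarrow> real \<Rightarrow> (nat \<Rightarrow> nat) \<Rightarrow> real" where
  "weightD q n \<rho> k = w_q q n k * \<rho> ^ abs_idx n k"

definition weightB :: "complex \<Rightarrow> nat \<Rightarrow> real \<Rightarrow> (nat \<Rightarrow> nat) \<Rightarrow> real" where
  "weightB q n \<rho> k =
     sqrt (multi_qfact ((norm q)\<^sup>2) n k / qfact ((norm q)\<^sup>2) (abs_idx n k))
     * u_q q n k * \<rho> ^ abs_idx n k"

definition wnorm :: "(real \<Rightarrow> (nat \<Rightarrow> nat) \<Rightarrow> real) \<Rightarrow> nat \<Rightarrow> real
                     \<Rightarrow> ((nat \<Rightarrow> nat) \<Rightarrow> complex) \<Rightarrow> real" where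
  "wnorm W n \<rho> c = (\<Sum>\<^sub>\<infinity>k\<in>multi_idx n. norm (c k) * W \<rho> k)"

definition wspace :: "(real \<Rightarrow> (nat \<Rightarrow> nat) \<Rightarrow> real) \<Rightarrow> nat
                      \<Rightarrow> ((nat \<Rightarrow> nat) \<Rightarrow> complex) set" where
  "wspace W n = {c \<in> formal_series n.
      \<forall>\<rho>>0. (\<lambda>k. norm (c k) * W \<rho> k) summable_on multi_idx n}"

definition wtopology :: "(real \<Rightarrow> (nat \<Rightarrow> nat) \<Rightarrow> real) \<Rightarrow> nat
                         \<Rightarrow> ((nat \<Rightarrow> nat) \<Rightarrow> complex) topology" where
  "wtopology W n = topology_generated_by
     {{c \<in> wspace W n. wnorm W n \<rho> (c - c0) < \<epsilon>} | c0 \<rho> \<epsilon>.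
        c0 \<in> wspace W n \<and> \<rho> > 0 \<and> \<epsilon> > 0}"

definition OqD :: "complex \<Rightarrow> nat \<Rightarrow> ((nat \<Rightarrow> nat) \<Rightarrow> complex) set" where
  "OqD q n = wspace (weightD q n) n"

definition OqB :: "complex \<Rightarrow> nat \<Rightarrow> ((nat \<Rightarrow> nat) \<Rightarrow> complex) set" where
  "OqB q n = wspace (weightB q n) n"

definition topD :: "complex \<Rightarrow> nat \<Rightarrow> ((nat \<Rightarrow> nat) \<Rightarrow> complex) topology" where
  "topD q n = wtopology (weightD q n) n"

definition topB :: "complex \<Rightarrow> nat \<Rightarrow> ((nat \<Rightarrow> nat) \<Rightarrow> complex) topology" where
  "topB q n = wtopology (weightB q n) n"

end

theory Submission imports Defs begin

lemma wspace_sub: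
  assumes nonneg: "\<And>\<rho> k. \<rho>>0 \<Longrightarrow> 0 \<le> W1 \<rho> k"
    and dom: "\<And>\<rho>. \<rho>>0 \<Longrightarrow> \<exists>\<rho>'>0. \<forall>k. W1 \<rho> k \<le> W2 \<rho>' k"
  shows "wspace W2 n \<subseteq> wspace W1 n"
proof
  fix c assume c: "c \<in> wspace W2 n"
  show "c \<in> wspace W1 n"
    unfolding wspace_def
  proof (intro CollectI conjI allI impI)
    show "c \<in> formal_series n" using c by (simp add: wspace_def)
    fix \<rho> :: real assume "\<rho> > 0"
    then obtain \<rho>' where "\<rho>'>0" and le: "\<forall>k. W1 \<rho> k \<le> W2 \<rho>' k" using dom by blast
    then have s: "(\<lambda>k. norm (c k) * W2 \<rho>' k) summable_on multi_idx n" using c by (simp add: wspace_def)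
    show "(\<lambda>k. norm (c k) * W1 \<rho> k) summable_on multi_idx n"
      apply (rule summable_on_comparison_test[OF s])
      using le nonneg[OF \<open>\<rho>>0\<close>] by (auto intro: mult_left_mono)
  qed
qed

lemma summable_diff:
  assumes nonneg: "\<And>k. 0 \<le> W \<rho> k" and "\<rho> > 0"
    and c: "c \<in> wspace W n" and d: "d \<in> wspace W n"
  shows "(\<lambda>k. norm ((c - d) k) * W \<rho> k) summable_on multi_idx n"
proof -
  have "(\<lambda>k. norm (c k) * W \<rho> k + norm (d k) * W \<rho> k) summable_on multi_idx n"
    using c d \<open>\<rho>>0\<close> by (intro summable_on_add) (auto simp: wspace_def)
  then show ?thesis
    apply (rule summable_on_comparison_test)
    using nonneg
    by (auto simp: distrib_right[symmetric] intro!: mult_right_mono norm_triangle_ineq4)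
qed

lemma wnorm_tri:
  assumes nonneg: "\<And>k. 0 \<le> W \<rho> k" and "\<rho> > 0"
    and c: "c \<in> wspace W n" and c1: "c1 \<in> wspace W n" and c0: "c0 \<in> wspace W n"
  shows "wnorm W n \<rho> (c - c0) \<le> wnorm W n \<rho> (c - c1) + wnorm W n \<rho> (c1 - c0)"
proof -
  have "wnorm W n \<rho> (c - c0) \<le> (\<Sum>\<^sub>\<infinity>k\<in>multi_idx n. norm ((c - c1) k) * W \<rho> k + norm ((c1 - c0) k) * W \<rho> k)"
    unfolding wnorm_def
    apply (rule infsum_mono)
      apply (rule summable_diff[where W=W and \<rho>=\<rho>, OF nonneg \<open>\<rho>>0\<close> c c0])
     apply (intro summable_on_add summable_diff[where W=W and \<rho>=\<rho>, OF nonneg \<open>\<rho>>0\<close>] c c1 c0)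
    subgoal for x
    using nonneg[of x] norm_triangle_ineq[of "c x - c1 x" "c1 x - c0 x"]
    by (auto simp: distrib_right[symmetric] intro!: mult_right_mono) done
  also have "\<dots> = wnorm W n \<rho> (c - c1) + wnorm W n \<rho> (c1 - c0)"
    unfolding wnorm_def
    by (intro infsum_add summable_diff[where W=W and \<rho>=\<rho>, OF nonneg \<open>\<rho>>0\<close>] c c1 c0)
  finally show ?thesis .
qed

lemma gen_open:
  assumes same: "wspace W1 n = wspace W2 n"
    and nonneg1: "\<And>\<rho> k. \<rho>>0 \<Longrightarrow> 0 \<le> W1 \<rho> k"
    and nonneg2: "\<And>\<rho> k. \<rho>>0 \<Longrightarrow> 0 \<le> W2 \<rho> k"
    and dom: "\<And>\<rho>. \<rho>>0 \<Longrightarrow> \<exists>\<rho>'>0. \<forall>k. W1 \<rho> k \<le> W2 \<rho>' k"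
    and s: "s \<in> {{c \<in> wspace W1 n. wnorm W1 n \<rho> (c - c0) < \<epsilon>} | c0 \<rho> \<epsilon>.
        c0 \<in> wspace W1 n \<and> \<rho> > 0 \<and> \<epsilon> > 0}"
  shows "generate_topology_on {{c \<in> wspace W2 n. wnorm W2 n \<rho> (c - c0) < \<epsilon>} | c0 \<rho> \<epsilon>.
        c0 \<in> wspace W2 n \<and> \<rho> > 0 \<and> \<epsilon> > 0} s"
    (is "generate_topology_on ?S2 s")
proof -
  obtain c0 \<rho> \<epsilon> where s_eq: "s = {c \<in> wspace W1 n. wnorm W1 n \<rho> (c - c0) < \<epsilon>}"
    and c0: "c0 \<in> wspace W1 n" and \<rho>: "\<rho> > 0" and "\<epsilon> > 0" using s by blast
  obtain \<rho>' where \<rho>': "\<rho>'>0" and le: "\<forall>k. W1 \<rho> k \<le> W2 \<rho>' k" using dom[OF \<rho>] by blast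
  have "s = \<Union>{b \<in> ?S2. b \<subseteq> s}"
  proof
    show "s \<subseteq> \<Union>{b \<in> ?S2. b \<subseteq> s}"
    proof
      fix c1 assume c1s: "c1 \<in> s"
      then have c1: "c1 \<in> wspace W1 n" and lt: "wnorm W1 n \<rho> (c1 - c0) < \<epsilon>" using s_eq by auto
      define \<delta> where "\<delta> = \<epsilon> - wnorm W1 n \<rho> (c1 - c0)"
      have "\<delta> > 0" using lt by (simp add: \<delta>_def)
      define b where "b = {c \<in> wspace W2 n. wnorm W2 n \<rho>' (c - c1) < \<delta>}"
      have "b \<in> ?S2" unfolding b_def using c1 same \<rho>' \<open>\<delta>>0\<close> by blast
      moreover have "c1 \<in> b"
        using c1 same \<open>\<delta>>0\<close> by (simp add: b_def wnorm_def)
      moreover have "b \<subseteq> s"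
      proof
        fix c assume cb: "c \<in> b"
        then have c: "c \<in> wspace W1 n" and cl: "wnorm W2 n \<rho>' (c - c1) < \<delta>" using same b_def by auto
        have "wnorm W1 n \<rho> (c - c1) \<le> wnorm W2 n \<rho>' (c - c1)"
          unfolding wnorm_def
          apply (rule infsum_mono)
            apply (rule summable_diff[where W=W1 and \<rho>=\<rho>, OF nonneg1[OF \<rho>] \<rho> c c1])
           apply (rule summable_diff[where W=W2 and \<rho>=\<rho>', OF nonneg2[OF \<rho>'] \<rho>']) using c c1 same apply auto[2]
          using le by (auto intro: mult_left_mono)
        moreover have "wnorm W1 n \<rho> (c - c0) \<le> wnorm W1 n \<rho> (c - c1) + wnorm W1 n \<rho> (c1 - c0)"
          by (rule wnorm_tri[where W=W1, OF nonneg1[OF \<rho>] \<rho> c c1 c0])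
        ultimately show "c \<in> s" using cl c unfolding s_eq \<delta>_def by auto
      qed
      ultimately show "c1 \<in> \<Union>{b \<in> ?S2. b \<subseteq> s}" by blast
    qed
  qed blast
  also have "generate_topology_on ?S2 \<dots>"
    by (rule generate_topology_on.UN) (auto intro: generate_topology_on.Basis)
  finally show ?thesis .
qed

lemma gen_mono:
  assumes "\<And>s. s \<in> S1 \<Longrightarrow> generate_topology_on S2 s"
  shows "generate_topology_on S1 u \<Longrightarrow> generate_topology_on S2 u"
  by (induction rule: generate_topology_on.induct) (auto intro: generate_topology_on.intros assms)

lemma wtop_eq:
  assumes nonneg1: "\<And>\<rho> k. \<rho>>0 \<Longrightarrow> 0 \<le> W1 \<rho> k"
    and nonneg2: "\<And>\<rho> k. \<rho>>0 \<Longrightarrow> 0 \<le> W2 \<rho> k"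
    and dom12: "\<And>\<rho>. \<rho>>0 \<Longrightarrow> \<exists>\<rho>'>0. \<forall>k. W1 \<rho> k \<le> W2 \<rho>' k"
    and dom21: "\<And>\<rho>. \<rho>>0 \<Longrightarrow> \<exists>\<rho>'>0. \<forall>k. W2 \<rho> k \<le> W1 \<rho>' k"
  shows "wspace W1 n = wspace W2 n \<and> wtopology W1 n = wtopology W2 n"
proof -
  have same: "wspace W1 n = wspace W2 n"
    using wspace_sub[of W1 W2 n, OF nonneg1 dom12] wspace_sub[of W2 W1 n, OF nonneg2 dom21] by blast
  have g12: "generate_topology_on {{c \<in> wspace W2 n. wnorm W2 n \<rho> (c - c0) < \<epsilon>} | c0 \<rho> \<epsilon>.
        c0 \<in> wspace W2 n \<and> \<rho> > 0 \<and> \<epsilon> > 0} s"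
    if "s \<in> {{c \<in> wspace W1 n. wnorm W1 n \<rho> (c - c0) < \<epsilon>} | c0 \<rho> \<epsilon>.
        c0 \<in> wspace W1 n \<and> \<rho> > 0 \<and> \<epsilon> > 0}" for s
    by (rule gen_open[of W1 n W2, OF same nonneg1 nonneg2 dom12 that])
  have g21: "generate_topology_on {{c \<in> wspace W1 n. wnorm W1 n \<rho> (c - c0) < \<epsilon>} | c0 \<rho> \<epsilon>.
        c0 \<in> wspace W1 n \<and> \<rho> > 0 \<and> \<epsilon> > 0} s"
    if "s \<in> {{c \<in> wspace W2 n. wnorm W2 n \<rho> (c - c0) < \<epsilon>} | c0 \<rho> \<epsilon>.
        c0 \<in> wspace W2 n \<and> \<rho> > 0 \<and> \<epsilon> > 0}" for s
    by (rule gen_open[of W2 n W1, OF same[symmetric] nonneg2 nonneg1 dom21 that])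
  have "generate_topology_on {{c \<in> wspace W1 n. wnorm W1 n \<rho> (c - c0) < \<epsilon>} | c0 \<rho> \<epsilon>.
        c0 \<in> wspace W1 n \<and> \<rho> > 0 \<and> \<epsilon> > 0} = generate_topology_on {{c \<in> wspace W2 n. wnorm W2 n \<rho> (c - c0) < \<epsilon>} | c0 \<rho> \<epsilon>.
        c0 \<in> wspace W2 n \<and> \<rho> > 0 \<and> \<epsilon> > 0}"
    using gen_mono[OF g12] gen_mono[OF g21] by blast
  then show ?thesis using same by (simp add: wtopology_def)
qed


lemma qint_Suc: "qint s (Suc j) = qint s j + s ^ j"
  by (simp add: qint_def)

lemma qint_nonneg: "0 \<le> s \<Longrightarrow> 0 \<le> qint s j"
  by (simp add: qint_def sum_nonneg)

lemma qint_ge1: "0 \<le> s \<Longrightarrow> j \<ge> 1 \<Longrightarrow> 1 \<le> qint s j"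
proof (induction j)
  case (Suc j) then show ?case
    by (cases "j = 0") (auto simp: qint_Suc qint_def intro: add_increasing2)
qed simp

lemma qint_mono: "0 \<le> s \<Longrightarrow> i \<le> j \<Longrightarrow> qint s i \<le> qint s j"
  unfolding qint_def by (rule sum_mono2) auto

lemma qfact_Suc: "qfact s (Suc m) = qfact s m * qint s (Suc m)"
  by (simp add: qfact_def prod.cl_ivl_Suc)

lemma qfact_0[simp]: "qfact s 0 = 1" by (simp add: qfact_def)

lemma qfact_ge1: "0 \<le> s \<Longrightarrow> 1 \<le> qfact s m"
proof (induction m)
  case (Suc m)
  then show ?case using mult_mono[OF Suc.IH[OF Suc.prems] qint_ge1[OF Suc.prems, of "Suc m"]] by (simp add: qfact_Suc)
qed simp

lemma qint_split: "qint s (a + b) = qint s a + s ^ a * qint s b"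
  by (induction b) (auto simp: qint_Suc qint_def power_add algebra_simps)

lemma qfact_lower: "0 \<le> s \<Longrightarrow> qfact s a * qfact s b \<le> qfact s (a + b)"
proof (induction b)
  case (Suc b)
  have "qfact s a * qfact s (Suc b) = (qfact s a * qfact s b) * qint s (Suc b)"
    by (simp add: qfact_Suc)
  also have "\<dots> \<le> qfact s (a + b) * qint s (Suc (a + b))"
    apply (rule mult_mono)
    using Suc qint_mono[of s "Suc b" "Suc (a+b)"] qint_nonneg[of s] qfact_ge1[of s]
    by (auto intro: order.trans[OF zero_le_one])
  finally show ?case by (simp add: qfact_Suc)
qed simp

lemma qfact_upper:
  assumes "0 \<le> s" "s \<le> 1"
  shows "qfact s (a + b) \<le> 2 ^ (a + b) * qfact s a * qfact s b"
proof (induction "a + b" arbitrary: a b)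
  case 0 then show ?case by simp
next
  case (Suc m)
  show ?case
  proof (cases "a = 0 \<or> b = 0")
    case True
    have g: "x \<le> 2 ^ (a + b) * x" if "0 \<le> x" for x :: real
      using that by (simp add: mult_le_cancel_right1)
    from True show ?thesis using g[of "qfact s a"] g[of "qfact s b"] qfact_ge1[OF assms(1), of a] qfact_ge1[OF assms(1), of b]
      by auto
  next
    case False
    then obtain a' b' where a: "a = Suc a'" and b: "b = Suc b'" by (meson not0_implies_Suc)
    have m1: "m = a' + b" and m2: "m = a + b'" using Suc.hyps a b by auto
    have fs: "qfact s (a + b) = qfact s m * qint s a + s ^ a * (qfact s m * qint s b)"
    proof -
      have "qfact s (a + b) = qfact s m * qint s (a + b)"
        by (simp only: Suc.hyps(2)[symmetric] qfact_Suc)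
      then show ?thesis by (simp add: qint_split algebra_simps)
    qed
    have h1: "qfact s m * qint s a \<le> 2 ^ m * qfact s a * qfact s b"
    proof -
      have "qfact s m \<le> 2 ^ m * qfact s a' * qfact s b" using Suc.hyps(1)[of a' b] m1 by simp
      then have "qfact s m * qint s a \<le> 2 ^ m * qfact s a' * qfact s b * qint s a"
        by (rule mult_right_mono) (rule qint_nonneg[OF assms(1)])
      then show ?thesis by (simp add: a qfact_Suc algebra_simps)
    qed
    have h2: "qfact s m * qint s b \<le> 2 ^ m * qfact s a * qfact s b"
    proof -
      have "qfact s m \<le> 2 ^ m * qfact s a * qfact s b'" using Suc.hyps(1)[of a b'] m2 by simp
      then have "qfact s m * qint s b \<le> 2 ^ m * qfact s a * qfact s b' * qint s b"
        by (rule mult_right_mono) (rule qint_nonneg[OF assms(1)])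
      then show ?thesis by (simp add: b qfact_Suc algebra_simps)
    qed
    have sa: "s ^ a \<le> 1" "0 \<le> s ^ a" using assms by (auto intro: power_le_one)
    have "0 \<le> qfact s m * qint s b"
      using qfact_ge1[OF assms(1)] qint_nonneg[OF assms(1)] by (meson mult_nonneg_nonneg order.trans zero_le_one)
    then have "s ^ a * (qfact s m * qint s b) \<le> qfact s m * qint s b"
      using sa by (simp add: mult_left_le_one_le)
    then have "qfact s (a + b) \<le> 2 * (2 ^ m * qfact s a * qfact s b)"
      using fs h1 h2 by linarith
    then show ?thesis by (simp add: Suc.hyps(2)[symmetric] mult.assoc)
  qed
qed

lemma abs_idx_Suc: "abs_idx (Suc n) k = abs_idx n k + k n"
  by (simp add: abs_idx_def)

lemma multi_qfact_Suc: "multi_qfact s (Suc n) k = multi_qfact s n k * qfact s (k n)"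
  by (simp add: multi_qfact_def)

lemma multi_qfact_ge1: "0 \<le> s \<Longrightarrow> 1 \<le> multi_qfact s n k"
  unfolding multi_qfact_def using qfact_ge1 by (simp add: prod_ge_1)

lemma multi_lower: "0 \<le> s \<Longrightarrow> multi_qfact s n k \<le> qfact s (abs_idx n k)"
proof (induction n)
  case 0 then show ?case by (simp add: multi_qfact_def abs_idx_def)
next
  case (Suc n)
  have "multi_qfact s (Suc n) k \<le> qfact s (abs_idx n k) * qfact s (k n)"
    unfolding multi_qfact_Suc using Suc qfact_ge1[of s]
    by (intro mult_right_mono) (auto intro: order.trans[OF zero_le_one])
  also have "\<dots> \<le> qfact s (abs_idx (Suc n) k)"
    using qfact_lower[OF Suc.prems] by (simp add: abs_idx_Suc)
  finally show ?case .
qed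

lemma multi_upper:
  assumes "0 \<le> s" "s \<le> 1"
  shows "qfact s (abs_idx n k) \<le> 2 ^ (n * abs_idx n k) * multi_qfact s n k"
proof (induction n)
  case 0 then show ?case by (simp add: multi_qfact_def abs_idx_def)
next
  case (Suc n)
  let ?A = "abs_idx n k"
  have "qfact s (abs_idx (Suc n) k) \<le> 2 ^ (?A + k n) * qfact s ?A * qfact s (k n)"
    using qfact_upper[OF assms] by (simp add: abs_idx_Suc)
  also have "\<dots> \<le> 2 ^ (?A + k n) * (2 ^ (n * ?A) * multi_qfact s n k) * qfact s (k n)"
    using Suc qfact_ge1[OF assms(1), of "k n"]
    by (intro mult_right_mono mult_left_mono) auto
  also have "\<dots> = 2 ^ (?A + k n + n * ?A) * multi_qfact s (Suc n) k"
    by (simp add: multi_qfact_Suc power_add algebra_simps)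
  also have "\<dots> \<le> 2 ^ (Suc n * abs_idx (Suc n) k) * multi_qfact s (Suc n) k"
    using multi_qfact_ge1[OF assms(1), of "Suc n" k]
    by (intro mult_right_mono power_increasing) (auto simp: abs_idx_Suc algebra_simps)
  finally show ?case .
qed

definition tri :: "nat \<Rightarrow> nat" where "tri m = (\<Sum>j\<in>{1..m}. j - 1)"

lemma tri_add: "tri (a + b) = tri a + tri b + a * b"
  by (induction b) (auto simp: tri_def)

lemma cross_Suc: "cross_exp (Suc n) k = cross_exp n k + abs_idx n k * k n"
  by (simp add: cross_exp_def abs_idx_def sum_distrib_right)

lemma tri_abs: "tri (abs_idx n k) = (\<Sum>i<n. tri (k i)) + cross_exp n k"
  by (induction n) (auto simp: abs_idx_Suc cross_Suc tri_add, simp_all add: abs_idx_def cross_exp_def tri_def)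

lemma qint_scale:
  assumes "r > 0" "j \<ge> 1"
  shows "qint r j = r ^ (j - 1) * qint (1 / r) j"
proof -
  have "qint r j = (\<Sum>i<j. r ^ (j - Suc i))"
    unfolding qint_def by (rule sum.nat_diff_reindex[symmetric])
  also have "\<dots> = (\<Sum>i<j. r ^ (j - 1) * (1 / r) ^ i)"
  proof (rule sum.cong[OF refl])
    fix i assume "i \<in> {..<j}"
    then have "j - 1 = (j - Suc i) + i" by auto
    then have "r ^ (j - 1) * (1/r) ^ i = r ^ (j - Suc i) * (r ^ i * (1/r) ^ i)"
      by (simp add: power_add)
    also have "\<dots> = r ^ (j - Suc i)" using assms by (simp add: power_one_over)
    finally show "r ^ (j - Suc i) = r ^ (j - 1) * (1 / r) ^ i" by simp
  qed
  also have "\<dots> = r ^ (j - 1) * qint (1 / r) j"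
    by (simp add: qint_def sum_distrib_left)
  finally show ?thesis .
qed

lemma tri_Suc: "tri (Suc m) = tri m + m"
  by (simp add: tri_def)

lemma qfact_scale: "r > 0 \<Longrightarrow> qfact r m = r ^ tri m * qfact (1 / r) m"
proof (induction m)
  case 0 then show ?case by (simp add: tri_def)
next
  case (Suc m)
  have "qfact r (Suc m) = (r ^ tri m * qfact (1 / r) m) * (r ^ m * qint (1 / r) (Suc m))"
    using Suc qint_scale[OF Suc.prems, of "Suc m"] by (simp only: qfact_Suc) simp
  also have "\<dots> = r ^ tri (Suc m) * qfact (1 / r) (Suc m)"
    by (simp only: tri_Suc qfact_Suc power_add mult_ac)
  finally show ?case .
qed

lemma multi_scale: "r > 0 \<Longrightarrow> multi_qfact r n k = r ^ (\<Sum>i<n. tri (k i)) * multi_qfact (1 / r) n k"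
proof (induction n)
  case 0 then show ?case by (simp add: multi_qfact_def)
next
  case (Suc n)
  have "multi_qfact r (Suc n) k = (r ^ (\<Sum>i<n. tri (k i)) * multi_qfact (1 / r) n k) * (r ^ tri (k n) * qfact (1 / r) (k n))"
    using Suc qfact_scale[OF Suc.prems, of "k n"] by (simp only: multi_qfact_Suc)
  also have "\<dots> = r ^ (\<Sum>i<Suc n. tri (k i)) * multi_qfact (1 / r) (Suc n) k"
    by (simp only: sum.lessThan_Suc multi_qfact_Suc power_add mult_ac)
  finally show ?case .
qed


lemma R_bounds:
  assumes "0 \<le> s" "s \<le> 1"
  shows "(1/2) ^ (n * abs_idx n k) \<le> multi_qfact s n k / qfact s (abs_idx n k)
         \<and> multi_qfact s n k / qfact s (abs_idx n k) \<le> 1"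
proof -
  have qf: "1 \<le> qfact s (abs_idx n k)" by (rule qfact_ge1[OF assms(1)])
  have lo: "multi_qfact s n k \<le> qfact s (abs_idx n k)" by (rule multi_lower[OF assms(1)])
  have up: "qfact s (abs_idx n k) \<le> 2 ^ (n * abs_idx n k) * multi_qfact s n k" by (rule multi_upper[OF assms])
  have "(1/2) ^ (n * abs_idx n k) * qfact s (abs_idx n k) \<le> multi_qfact s n k"
    using up by (simp add: power_one_over field_simps)
  then show ?thesis using qf lo by (simp add: field_simps)
qed

lemma weight_rel:
  assumes "q \<noteq> 0"
  shows "\<exists>R. (1/2) ^ (n * abs_idx n k) \<le> R \<and> R \<le> 1 \<and> weightB q n \<rho> k = sqrt R * weightD q n \<rho> k"
proof (cases "norm q \<ge> 1")
  case False
  define r where "r = (norm q)\<^sup>2"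
  have r: "0 \<le> r" "r \<le> 1" using False by (auto simp: r_def abs_square_le_1)
  show ?thesis
    apply (rule exI[of _ "multi_qfact r n k / qfact r (abs_idx n k)"])
    using R_bounds[OF r, of n k] False
    by (simp add: weightB_def weightD_def w_q_def u_q_def r_def)
next
  case True
  define r where "r = (norm q)\<^sup>2"
  have rpos: "r > 0" using assms by (simp add: r_def)
  have r1: "r \<ge> 1" using True by (simp add: r_def one_le_power)
  define s where "s = 1 / r"
  have s: "0 \<le> s" "s \<le> 1" using r1 by (auto simp: s_def)
  define T where "T = (\<Sum>i<n. tri (k i))"
  define X where "X = multi_qfact s n k / qfact s (abs_idx n k)"
  define c where "c = cross_exp n k"
  have m1: "multi_qfact r n k = r ^ T * multi_qfact s n k"
    unfolding s_def T_def by (rule multi_scale[OF rpos])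
  have q1: "qfact r (abs_idx n k) = r ^ T * r ^ c * qfact s (abs_idx n k)"
    unfolding s_def T_def c_def using qfact_scale[OF rpos, of "abs_idx n k"]
    by (simp only: tri_abs power_add)
  have rT: "r ^ T > 0" using rpos by simp
  have eq: "multi_qfact r n k / qfact r (abs_idx n k) = X / r ^ c"
    unfolding m1 q1 X_def using rT rpos by (simp add: field_simps)
  have rc: "r ^ c = (norm q ^ c)\<^sup>2"
    by (simp add: r_def power_mult[symmetric] mult.commute)
  have sq: "sqrt (r ^ c) = norm q ^ c"
    unfolding rc by simp
  have nz: "norm q ^ c \<noteq> 0" using assms by simp
  have "weightB q n \<rho> k = sqrt (multi_qfact r n k / qfact r (abs_idx n k)) * norm q ^ c * \<rho> ^ abs_idx n k"
    unfolding weightB_def u_q_def r_def c_def by simp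
  also have "\<dots> = sqrt (X / r ^ c) * norm q ^ c * \<rho> ^ abs_idx n k"
    by (simp only: eq)
  also have "\<dots> = sqrt X * \<rho> ^ abs_idx n k"
    using nz by (simp add: real_sqrt_divide sq)
  finally have "weightB q n \<rho> k = sqrt (multi_qfact s n k / qfact s (abs_idx n k)) * \<rho> ^ abs_idx n k"
    by (simp add: X_def)
  then show ?thesis
    apply (intro exI[of _ "multi_qfact s n k / qfact s (abs_idx n k)"])
    using R_bounds[OF s, of n k] True
    by (simp add: weightD_def w_q_def)
qed


lemma le_sqrt: assumes "0 \<le> (R::real)" "R \<le> 1" shows "R \<le> sqrt R" "sqrt R \<le> 1" "0 \<le> sqrt R"
proof -
  show s1: "sqrt R \<le> 1" "0 \<le> sqrt R" using assms by auto
  have "R = sqrt R * sqrt R" using assms by simp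
  also have "\<dots> \<le> sqrt R" by (rule mult_left_le_one_le[OF s1(2) s1(2) s1(1)])
  finally show "R \<le> sqrt R" .
qed

lemma half_pow_nonneg: "0 \<le> ((1::real)/2) ^ m" by simp

lemma weightD_nonneg: "\<rho> > 0 \<Longrightarrow> 0 \<le> weightD q n \<rho> k"
  by (simp add: weightD_def w_q_def)

lemma weightB_nonneg: "q \<noteq> 0 \<Longrightarrow> \<rho> > 0 \<Longrightarrow> 0 \<le> weightB q n \<rho> k"
  using weight_rel[of q n k \<rho>] weightD_nonneg[of \<rho> q n k] le_sqrt half_pow_nonneg
  by (metis mult_nonneg_nonneg order.trans)

lemma B_le_D: "q \<noteq> 0 \<Longrightarrow> \<rho> > 0 \<Longrightarrow> weightB q n \<rho> k \<le> weightD q n \<rho> k"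
  using weight_rel[of q n k \<rho>] weightD_nonneg[of \<rho> q n k] le_sqrt half_pow_nonneg
  by (metis mult_left_le_one_le order.trans)

lemma D_le_B: assumes "q \<noteq> 0" "\<rho> > 0" shows "weightD q n \<rho> k \<le> weightB q n (2 ^ n * \<rho>) k"
proof -
  obtain R where R: "(1/2) ^ (n * abs_idx n k) \<le> R" "R \<le> 1"
    and e: "weightB q n (2 ^ n * \<rho>) k = sqrt R * weightD q n (2 ^ n * \<rho>) k"
    using weight_rel[OF assms(1), of n k "2 ^ n * \<rho>"] by blast
  have R0: "0 \<le> R" using R(1) half_pow_nonneg order.trans by blast
  have "R \<le> sqrt R" using R0 R(2) by (rule le_sqrt)
  have wD: "weightD q n (2 ^ n * \<rho>) k = 2 ^ (n * abs_idx n k) * weightD q n \<rho> k"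
    by (simp add: weightD_def power_mult_distrib power_mult)
  have "weightD q n \<rho> k = ((1/2) ^ (n * abs_idx n k)) * weightD q n (2 ^ n * \<rho>) k"
    by (simp add: wD power_one_over)
  also have "\<dots> \<le> sqrt R * weightD q n (2 ^ n * \<rho>) k"
    using R(1) \<open>R \<le> sqrt R\<close> weightD_nonneg[of "2^n*\<rho>" q n k] assms(2)
    by (intro mult_right_mono) auto
  finally show ?thesis using e by simp
qed

theorem corollary4p3:
  fixes q :: complex and n :: nat
  assumes "q \<noteq> 0"
  shows "OqB q n = OqD q n \<and> topB q n = topD q n"
  unfolding OqB_def OqD_def topB_def topD_def
proof (rule wtop_eq)
  show "\<And>\<rho> k. \<rho>>0 \<Longrightarrow> 0 \<le> weightB q n \<rho> k" using weightB_nonneg[OF assms] by blast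
  show "\<And>\<rho> k. \<rho>>0 \<Longrightarrow> 0 \<le> weightD q n \<rho> k" using weightD_nonneg by blast
  show "\<exists>\<rho>'>0. \<forall>k. weightB q n \<rho> k \<le> weightD q n \<rho>' k" if "\<rho> > 0" for \<rho>
    using B_le_D[OF assms that] that by blast
  show "\<exists>\<rho>'>0. \<forall>k. weightD q n \<rho> k \<le> weightB q n \<rho>' k" if "\<rho> > 0" for \<rho>
    using D_le_B[OF assms that] that by (intro exI[of _ "2 ^ n * \<rho>"]) auto
qed

end
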